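(* Fix an integer $C\ge 2$. There exists $\rho_0>0$ (depending only on $C$; e.g. $\rho_0=3$ suffices) such that for every $\rho\ge\rho_0$ and all $h_L\in[0,1]$, $h_S\in[0,1]$, $h_F\in(-1,1)$, $$\frac{\partial \mathcal{J}_h^{\mathcal{G}}}{\partial h_S}\ge 0 .$$
   Context: Setting: $C\ge 2$ is the number of classes, $h_L\in[0,1]$ (label homophily), $h_S\in[0,1]$ (structural homophily), $h_F\in(-1,1)$ (feature homophily), and $\rho>0$ a real parameter (the spectral radius of the adjacency matrix). Define $$p_0=\frac{h_LC-1}{C-1},\qquad p_1=\frac{1-h_L}{C-1},\qquad \omega=\frac{h_F}{\rho},\qquad Q=C\,p_1^2+\frac{C(1-h_S)^2}{C-1}+p_0^2\ (>0),$$ $$\mathcal{J}_h^{\neg\mathcal{G}}=\frac{1-\omega^2 Q}{(1-\omega p_0)^2},\qquad \mathcal{J}_h^{\mathcal{G}}=\frac{p_0^2}{Q}\,\mathcal{J}_h^{\neg\mathcal{G}}.$$ Partial derivatives are taken with $C$ and $\rho$ held fixed. *)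

theory Defs
  imports "HOL-Analysis.Analysis"
begin

definition p0_of :: "real \<Rightarrow> real \<Rightarrow> real" where
  "p0_of C hL = (hL * C - 1) / (C - 1)"

definition p1_of :: "real \<Rightarrow> real \<Rightarrow> real" where
  "p1_of C hL = (1 - hL) / (C - 1)"

definition omega_of :: "real \<Rightarrow> real \<Rightarrow> real" where
  "omega_of \<rho> hF = hF / \<rho>"

definition Q_of :: "real \<Rightarrow> real \<Rightarrow> real \<Rightarrow> real" where
  "Q_of C hL hS = C * (p1_of C hL)^2 + C * (1 - hS)^2 / (C - 1) + (p0_of C hL)^2"

definition J_noG :: "real \<Rightarrow> real \<Rightarrow> real \<Rightarrow> real \<Rightarrow> real \<Rightarrow> real" where
  "J_noG C \<rho> hL hS hF =
     (1 - (omega_of \<rho> hF)^2 * Q_of C hL hS) / (1 - omega_of \<rho> hF * p0_of C hL)^2"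

definition J_G :: "real \<Rightarrow> real \<Rightarrow> real \<Rightarrow> real \<Rightarrow> real \<Rightarrow> real" where
  "J_G C \<rho> hL hS hF = (p0_of C hL)^2 / Q_of C hL hS * J_noG C \<rho> hL hS hF"

end

theory Submission
  imports Defs
begin

theorem theorem2p2:
  fixes C :: nat
  assumes "C \<ge> 2"
  shows "\<exists>\<rho>0 > 0. \<forall>\<rho> \<ge> \<rho>0. \<forall>hL \<in> {0..1}. \<forall>hS::real \<in> {0..1}. \<forall>hF \<in> {-1<..<1}.
           deriv (\<lambda>s. J_G (real C) \<rho> hL s hF) hS \<ge> 0"
proof (intro exI[of _ 1] conjI allI impI ballI)
  fix \<rho> hL hS hF :: real
  assume "hS \<in> {0..1}"
  hence hS: "hS \<le> 1" by simp
  define p0 where "p0 = p0_of (real C) hL"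
  define p1 where "p1 = p1_of (real C) hL"
  define w where "w = omega_of \<rho> hF"
  define c1 where "c1 = real C * p1^2 + p0^2"
  define k where "k = real C / (real C - 1)"
  define A where "A = p0^2 / (1 - w*p0)^2"
  have C2: "real C \<ge> 2" using assms by simp
  have kpos: "k > 0" unfolding k_def using C2 by simp
  have c1pos: "c1 > 0"
  proof -
    have "p0 \<noteq> 0 \<or> p1 \<noteq> 0"
    proof (rule ccontr)
      assume "\<not> ?thesis"
      hence a: "p0 = 0" "p1 = 0" by auto
      have "1 - hL = 0" using a(2) C2 unfolding p1_def p1_of_def by simp
      hence "hL = 1" by simp
      hence "p0 = 1" unfolding p0_def p0_of_def using C2 by simp
      with a show False by simp
    qed
    thus ?thesis unfolding c1_def using C2
      by (auto intro: add_nonneg_pos add_pos_nonneg)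
  qed
  have Qeq: "\<And>s. Q_of (real C) hL s = c1 + k*(1-s)^2"
    unfolding Q_of_def c1_def k_def p0_def p1_def by simp
  have Qpos: "\<And>s. c1 + k*(1-s)^2 > 0" using c1pos kpos
    by (simp add: add_pos_nonneg)
  have feq: "(\<lambda>s. J_G (real C) \<rho> hL s hF) = (\<lambda>s. A * (inverse (c1 + k*(1-s)^2) - w^2))"
  proof
    fix s
    have q: "c1 + k*(1-s)^2 \<noteq> 0" using Qpos[of s] by simp
    show "J_G (real C) \<rho> hL s hF = A * (inverse (c1 + k*(1-s)^2) - w^2)"
      unfolding J_G_def J_noG_def Qeq A_def
      using q by (simp add: p0_def w_def field_simps)
  qed
  have d: "((\<lambda>s. A * (inverse (c1 + k*(1-s)^2) - w^2)) has_real_derivative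
      A * (- ((inverse (c1 + k*(1-hS)^2))^2) * (k * (2*(1-hS)*(-1))))) (at hS)"
    using Qpos[of hS]
    apply (intro derivative_eq_intros refl)
    apply (auto simp: power2_eq_square)
    done
  have "deriv (\<lambda>s. J_G (real C) \<rho> hL s hF) hS =
      A * (- ((inverse (c1 + k*(1-hS)^2))^2) * (k * (2*(1-hS)*(-1))))"
    unfolding feq using DERIV_imp_deriv[OF d] .
  also have "\<dots> = A * ((inverse (c1 + k*(1-hS)^2))^2 * (k * (2*(1-hS))))" by (simp add: algebra_simps)
  also have "\<dots> \<ge> 0" unfolding A_def using kpos hS by simp
  finally show "deriv (\<lambda>s. J_G (real C) \<rho> hL s hF) hS \<ge> 0" .
qed simp

end
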